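(* Let $\Gamma$ be a discrete subgroup of $E(n)$, and let $A=\lambda A'$, where $A'\in O(n)$ and $\lambda>0$. Suppose that $A\Gamma A^{-1}\subset\Gamma$. Then $A\Gamma A^{-1}$ is a subgroup of finite index in $\Gamma$.
   Context: $E(n)$ denotes the group of isometries of $\mathbb{R}^n$ (maps $x\mapsto Bx+b$, $B\in O(n)$, $b\in\mathbb{R}^n$) with the topology of $O(n)\times\mathbb{R}^n$; discreteness refers to this topology. $A\Gamma A^{-1}=\{A\circ\gamma\circ A^{-1}:\gamma\in\Gamma\}$. *)

theory Defs
  imports "HOL-Analysis.Analysis" "HOL-Algebra.Coset"
begin

definition isom :: "real^'n^'n \<Rightarrow> real^'n \<Rightarrow> (real^'n \<Rightarrow> real^'n)" where
  "isom B b = (\<lambda>x. B *v x + b)"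

definition Eucl_group :: "(real^'n \<Rightarrow> real^'n) monoid" where
  "Eucl_group = \<lparr>carrier = {isom B b | B b. orthogonal_matrix B},
                  mult = (\<lambda>f g. f \<circ> g), one = id\<rparr>"

text \<open>Discreteness of a subset of E(n), using the topology of O(n) x R^n
  (the parametrisation (B,b) \<mapsto> isom B b is injective).\<close>
definition discrete_isom_set :: "(real^'n \<Rightarrow> real^'n) set \<Rightarrow> bool" where
  "discrete_isom_set \<Gamma> =
     discrete {(B, b). orthogonal_matrix B \<and> isom B b \<in> \<Gamma>}"

definition conj_set :: "('a \<Rightarrow> 'a) \<Rightarrow> ('a \<Rightarrow> 'a) set \<Rightarrow> ('a \<Rightarrow> 'a) set" where
  "conj_set A \<Gamma> = {A \<circ> \<gamma> \<circ> inv_into UNIV A | \<gamma>. \<gamma> \<in> \<Gamma>}"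

end

theory Submission
  imports Defs
begin



lemma orth_norm: fixes B :: "real^'n^'n" assumes "orthogonal_matrix B"
  shows "norm (B *v x) = norm x"
proof -
  have "orthogonal_transformation (\<lambda>x. B *v x)"
    using assms by (simp add: orthogonal_transformation_matrix)
  thus ?thesis by (simp add: orthogonal_transformation_norm)
qed

lemma orth_entry: fixes B :: "real^'n^'n" assumes "orthogonal_matrix B"
  shows "\<bar>B$i$j\<bar> \<le> 1"
proof -
  have "norm (row i B) = 1" using assms orthogonal_matrix_orthonormal_rows by blast
  moreover have "\<bar>row i B $ j\<bar> \<le> norm (row i B)" by (rule component_le_norm_cart)
  ultimately show ?thesis by (simp add: row_def)
qed

lemma isom_comp: "isom B b \<circ> isom C c = isom (B ** C) (B *v c + b)"
  by (auto simp: isom_def fun_eq_iff matrix_vector_mul_assoc matrix_vector_right_distrib)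

lemma isom_0: "isom B b 0 = b" by (simp add: isom_def)

lemma isom_inj: assumes "isom B b = isom C c" shows "B = C \<and> b = c"
proof -
  have b: "b = c" using fun_cong[OF assms, of 0] by (simp add: isom_def)
  have "\<forall>x. B *v x = C *v x" using assms b by (auto simp: isom_def fun_eq_iff)
  thus ?thesis using b matrix_eq by blast
qed

lemma isom_id: "isom (mat 1) 0 = id" by (simp add: isom_def fun_eq_iff)

lemma carrier_E: "carrier Eucl_group = {isom B b | B b. orthogonal_matrix B}"
  by (simp add: Eucl_group_def)

lemma E_simps [simp]: "mult Eucl_group = (\<lambda>f g. f \<circ> g)" "one Eucl_group = id"
  by (simp_all add: Eucl_group_def)

lemma isom_inv: assumes "orthogonal_matrix B"
  shows "isom (transpose B) (- (transpose B *v b)) \<circ> isom B b = id"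
  using assms unfolding isom_comp orthogonal_matrix_def
  by (simp add: matrix_vector_mult_0_right isom_id[symmetric] del: transpose_matrix_vector)

lemma group_E: "group (Eucl_group :: (real^'n \<Rightarrow> real^'n) monoid)"
proof (rule groupI)
  fix x y :: "real^'n \<Rightarrow> real^'n"
  assume "x \<in> carrier Eucl_group" "y \<in> carrier Eucl_group"
  then obtain B b C c where "orthogonal_matrix B" "orthogonal_matrix C" "x = isom B b" "y = isom C c"
    by (auto simp: carrier_E)
  thus "x \<otimes>\<^bsub>Eucl_group\<^esub> y \<in> carrier Eucl_group"
    by (auto simp: carrier_E isom_comp intro: orthogonal_matrix_mul)
next
  show "\<one>\<^bsub>Eucl_group\<^esub> \<in> carrier (Eucl_group :: (real^'n \<Rightarrow> real^'n) monoid)"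
    by (simp add: carrier_E) (metis isom_id orthogonal_matrix_id)
next
  fix x y z :: "real^'n \<Rightarrow> real^'n"
  show "x \<otimes>\<^bsub>Eucl_group\<^esub> y \<otimes>\<^bsub>Eucl_group\<^esub> z = x \<otimes>\<^bsub>Eucl_group\<^esub> (y \<otimes>\<^bsub>Eucl_group\<^esub> z)"
    by (simp add: comp_assoc)
next
  fix x :: "real^'n \<Rightarrow> real^'n"
  show "\<one>\<^bsub>Eucl_group\<^esub> \<otimes>\<^bsub>Eucl_group\<^esub> x = x" by simp
next
  fix x :: "real^'n \<Rightarrow> real^'n"
  assume "x \<in> carrier Eucl_group"
  then obtain B b where B: "orthogonal_matrix B" "x = isom B b" by (auto simp: carrier_E)
  have "isom (transpose B) (- (transpose B *v b)) \<in> carrier Eucl_group"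
    using B by (auto simp: carrier_E)
  thus "\<exists>y\<in>carrier Eucl_group. y \<otimes>\<^bsub>Eucl_group\<^esub> x = \<one>\<^bsub>Eucl_group\<^esub>"
    using isom_inv[OF B(1)] B by force
qed

lemma inv_E: assumes "orthogonal_matrix B"
  shows "inv\<^bsub>Eucl_group\<^esub> (isom B b) = isom (transpose B) (- (transpose B *v b))"
  by (rule group.inv_equality[OF group_E]) (use assms isom_inv in \<open>auto simp: carrier_E\<close>)


declare transpose_matrix_vector[simp del]


lemma isomE: assumes "g \<in> carrier Eucl_group"
  obtains B b where "orthogonal_matrix B" "g = isom B b"
  using assms by (auto simp: carrier_E)

lemma unif:
  fixes \<Gamma> :: "(real^'n \<Rightarrow> real^'n) set"
  assumes sg: "subgroup \<Gamma> Eucl_group" and disc: "discrete_isom_set \<Gamma>"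
  obtains e where "e>0" "\<And>B b C c. orthogonal_matrix B \<Longrightarrow> orthogonal_matrix C \<Longrightarrow> isom B b \<in> \<Gamma> \<Longrightarrow> isom C c \<in> \<Gamma>
     \<Longrightarrow> norm (mat 1 - transpose B ** C) + norm (c - b) < e \<Longrightarrow> B = C \<and> b = c"
proof -
  let ?P = "{(B, b). orthogonal_matrix B \<and> isom B b \<in> \<Gamma>}"
  have "id \<in> \<Gamma>" using subgroup.one_closed[OF sg] by simp
  hence "isom (mat 1) (0::real^'n) \<in> \<Gamma>" by (simp add: isom_id)
  hence P1: "(mat 1, 0) \<in> ?P" using orthogonal_matrix_id by simp
  have "discrete ?P" using disc by (simp add: discrete_isom_set_def)
  from isolated_inE_dist[OF discreteD[OF this P1]]
  obtain d where d: "d > 0" "\<And>y. y \<in> ?P \<Longrightarrow> dist (mat 1, 0) y < d \<Longrightarrow> y = (mat 1, 0)" by blast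
  show ?thesis
  proof (rule that[OF d(1)])
    fix B b C c
    assume B: "orthogonal_matrix B" and C: "orthogonal_matrix C" and gB: "isom B b \<in> \<Gamma>"
      and gC: "isom C c \<in> \<Gamma>" and sm: "norm (mat 1 - transpose B ** C) + norm (c - b) < d"
    have "inv\<^bsub>Eucl_group\<^esub> (isom B b) \<in> \<Gamma>" using subgroup.m_inv_closed[OF sg gB] .
    hence "isom (transpose B) (- (transpose B *v b)) \<in> \<Gamma>" using inv_E[OF B] by simp
    hence "isom (transpose B) (- (transpose B *v b)) \<circ> isom C c \<in> \<Gamma>"
      using subgroup.m_closed[OF sg _ gC] by fastforce
    hence "isom (transpose B ** C) (transpose B *v (c - b)) \<in> \<Gamma>"
      by (simp add: isom_comp matrix_vector_mult_diff_distrib)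
    hence inP: "(transpose B ** C, transpose B *v (c - b)) \<in> ?P"
      using B C orthogonal_matrix_mul orthogonal_matrix_transpose by blast
    have nv: "norm (transpose B *v (c - b)) = norm (c - b)"
      using orth_norm B orthogonal_matrix_transpose by blast
    have "dist (mat 1, 0) (transpose B ** C, transpose B *v (c - b))
          = norm (mat 1 - transpose B ** C, - (transpose B *v (c - b)))"
      by (simp add: dist_norm)
    also have "\<dots> \<le> norm (mat 1 - transpose B ** C) + norm (c - b)"
      using norm_Pair_le[of "mat 1 - transpose B ** C" "- (transpose B *v (c - b))"] nv by simp
    finally have "dist (mat 1, 0) (transpose B ** C, transpose B *v (c - b)) < d" using sm by simp
    from d(2)[OF inP this] have e1: "transpose B ** C = mat 1" and e2: "transpose B *v (c - b) = 0" by auto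
    have "C = B ** (transpose B ** C)" using B by (simp add: matrix_mul_assoc orthogonal_matrix_def)
    hence "C = B" using e1 by simp
    moreover have "c = b" using e2 nv by simp
    ultimately show "B = C \<and> b = c" by simp
  qed
qed



lemma norm_le_l1_gen: "norm (x::'a::real_normed_vector^'n) \<le> sum (\<lambda>i. norm (x$i)) UNIV"
  by (simp add: norm_vec_def L2_set_le_sum)

lemma vec_bound: fixes x :: "real^'n" assumes "\<And>i. \<bar>x$i\<bar> \<le> t"
  shows "norm x \<le> real CARD('n) * t"
proof -
  have "norm x \<le> sum (\<lambda>i. \<bar>x$i\<bar>) UNIV" by (rule norm_le_l1_cart)
  also have "\<dots> \<le> sum (\<lambda>i. t) (UNIV::'n set)" by (rule sum_mono) (use assms in auto)
  finally show ?thesis by simp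
qed

lemma mat_bound: fixes M :: "real^'n^'n" assumes "\<And>i j. \<bar>M$i$j\<bar> \<le> t"
  shows "norm M \<le> real CARD('n) * (real CARD('n) * t)"
proof -
  have "norm M \<le> sum (\<lambda>i. norm (M$i)) UNIV" by (rule norm_le_l1_gen)
  also have "\<dots> \<le> sum (\<lambda>i. real CARD('n) * t) (UNIV::'n set)"
    by (rule sum_mono) (rule vec_bound, rule assms)
  finally show ?thesis by simp
qed

lemma close_small:
  fixes B C :: "real^'n^'n"
  assumes B: "orthogonal_matrix B" and d: "\<And>i j. \<bar>B$i$j - C$i$j\<bar> \<le> \<delta>"
  shows "norm (mat 1 - transpose B ** C) \<le> real CARD('n) * (real CARD('n) * (real CARD('n) * \<delta>))"
proof (rule mat_bound)
  fix i j
  have e: "(mat 1 - transpose B ** C)$i$j = (\<Sum>k\<in>UNIV. B$k$i * (B$k$j - C$k$j))"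
  proof -
    have "(mat 1 :: real^'n^'n)$i$j = (transpose B ** B)$i$j" using B by (simp add: orthogonal_matrix_def)
    thus ?thesis by (simp add: matrix_matrix_mult_def transpose_def right_diff_distrib sum_subtractf)
  qed
  have "\<bar>\<Sum>k\<in>UNIV. B$k$i * (B$k$j - C$k$j)\<bar> \<le> (\<Sum>k\<in>UNIV. \<bar>B$k$i * (B$k$j - C$k$j)\<bar>)"
    by (rule sum_abs)
  also have "\<dots> \<le> (\<Sum>k\<in>(UNIV::'n set). \<delta>)"
  proof (rule sum_mono)
    fix k
    have "\<bar>B$k$i\<bar> \<le> 1" using orth_entry[OF B] .
    moreover have "\<bar>B$k$j - C$k$j\<bar> \<le> \<delta>" using d .
    ultimately show "\<bar>B$k$i * (B$k$j - C$k$j)\<bar> \<le> \<delta>"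
      using mult_mono[of "\<bar>B$k$i\<bar>" 1 "\<bar>B$k$j - C$k$j\<bar>" \<delta>] by (simp add: abs_mult)
  qed
  finally show "\<bar>(mat 1 - transpose B ** C)$i$j\<bar> \<le> real CARD('n) * \<delta>"
    using e by simp
qed



lemma floor_close: assumes "(\<delta>::real) > 0" "\<lfloor>x/\<delta>\<rfloor> = \<lfloor>y/\<delta>\<rfloor>" shows "\<bar>x - y\<bar> \<le> \<delta>"
proof -
  have "\<bar>x/\<delta> - y/\<delta>\<bar> < 1" using assms(2) floor_correct[of "x/\<delta>"] floor_correct[of "y/\<delta>"]
    by linarith
  hence "\<bar>x - y\<bar> / \<delta> < 1" using assms(1) by (simp add: diff_divide_distrib[symmetric])
  thus ?thesis using assms(1) by (simp add: field_simps)
qed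

lemma floor_bound: assumes "(\<delta>::real) > 0" "\<bar>x\<bar> \<le> M"
  shows "\<lfloor>x/\<delta>\<rfloor> \<in> {-(\<lceil>M/\<delta>\<rceil>+1)..\<lceil>M/\<delta>\<rceil>+1}"
proof -
  have "x \<le> M" "-M \<le> x" using assms by auto
  have 1: "x/\<delta> \<le> M/\<delta>" using divide_right_mono[of x M \<delta>] assms(1) \<open>x \<le> M\<close> by simp
  have 2: "-(M/\<delta>) \<le> x/\<delta>" using divide_right_mono[of "-M" x \<delta>] assms(1) \<open>-M \<le> x\<close> by simp
  have "\<lfloor>x/\<delta>\<rfloor> \<le> \<lceil>M/\<delta>\<rceil>" using floor_le_ceiling[of "x/\<delta>"] ceiling_mono[OF 1] by linarith
  moreover have "\<lfloor>-(M/\<delta>)\<rfloor> \<le> \<lfloor>x/\<delta>\<rfloor>" using floor_mono[OF 2] .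
  moreover have "\<lfloor>-(M/\<delta>)\<rfloor> = - \<lceil>M/\<delta>\<rceil>" by (rule floor_minus)
  ultimately show ?thesis by simp
qed

lemma poly_bound:
  fixes \<Gamma> :: "(real^'n \<Rightarrow> real^'n) set"
  assumes sg: "subgroup \<Gamma> Eucl_group" and disc: "discrete_isom_set \<Gamma>"
  obtains K :: real where "K > 0" "\<And>R. 0 \<le> R \<Longrightarrow> finite {g\<in>\<Gamma>. norm (g 0) \<le> R} \<and>
     real (card {g\<in>\<Gamma>. norm (g 0) \<le> R}) \<le> (K*(R+1))^(CARD('n) + CARD('n)*CARD('n))"
proof -
  obtain e where e: "e>0" and eu: "\<And>B b C c. orthogonal_matrix B \<Longrightarrow> orthogonal_matrix C \<Longrightarrow> isom B b \<in> \<Gamma> \<Longrightarrow> isom C c \<in> \<Gamma>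
     \<Longrightarrow> norm (mat 1 - transpose B ** C) + norm (c - b) < e \<Longrightarrow> B = C \<and> b = c"
    using unif[OF sg disc] by blast
  define N where "N = real CARD('n)"
  define \<delta> where "\<delta> = e / (N*(N*N) + N + 1)"
  have N0: "N \<ge> 0" by (simp add: N_def)
  have pos3: "N*(N*N) + N + 1 > 0" using N0 by (smt (verit) mult_nonneg_nonneg)
  have dpos: "\<delta> > 0" unfolding \<delta>_def using e pos3 by simp
  have small: "N*(N*(N*\<delta>)) + N*\<delta> < e"
  proof -
    have "N*(N*(N*\<delta>)) + N*\<delta> = \<delta> * (N*(N*N) + N)" by (simp add: algebra_simps)
    also have "\<dots> < \<delta> * (N*(N*N) + N + 1)" using dpos by simp
    also have "\<dots> = e" unfolding \<delta>_def using pos3 by simp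
    finally show ?thesis .
  qed
  define mB where "mB g = matrix (\<lambda>x. g x - g 0)" for g :: "real^'n \<Rightarrow> real^'n"
  define key where "key g = ((\<lambda>i. \<lfloor>(g 0)$i/\<delta>\<rfloor>), (\<lambda>i j. \<lfloor>(mB g)$i$j/\<delta>\<rfloor>))" for g :: "real^'n \<Rightarrow> real^'n"
  have mBi: "mB (isom B b) = B" for B b
    unfolding mB_def isom_def by simp
  have GE: "g \<in> \<Gamma> \<Longrightarrow> g \<in> carrier Eucl_group" for g using subgroup.subset[OF sg] by blast
  have inj: "inj_on key \<Gamma>"
  proof (rule inj_onI)
    fix g h assume g: "g \<in> \<Gamma>" and h: "h \<in> \<Gamma>" and k: "key g = key h"
    obtain B b where B: "orthogonal_matrix B" "g = isom B b" using isomE[OF GE[OF g]] by blast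
    obtain C c where C: "orthogonal_matrix C" "h = isom C c" using isomE[OF GE[OF h]] by blast
    have k1: "\<lfloor>b$i/\<delta>\<rfloor> = \<lfloor>c$i/\<delta>\<rfloor>" and k2: "\<lfloor>B$i$j/\<delta>\<rfloor> = \<lfloor>C$i$j/\<delta>\<rfloor>" for i j
      using k B C unfolding key_def by (auto simp: mBi isom_0 fun_eq_iff)
    have d1: "\<bar>B$i$j - C$i$j\<bar> \<le> \<delta>" for i j using floor_close[OF dpos k2] .
    have d2: "\<bar>(c - b)$i\<bar> \<le> \<delta>" for i using floor_close[OF dpos k1[symmetric]] by simp
    have "norm (mat 1 - transpose B ** C) \<le> N*(N*(N*\<delta>))"
      using close_small[OF B(1) d1] unfolding N_def .
    moreover have "norm (c - b) \<le> N*\<delta>" using vec_bound[of "c - b" \<delta>] d2 unfolding N_def by blast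
    ultimately have "norm (mat 1 - transpose B ** C) + norm (c - b) < e" using small by linarith
    from eu[OF B(1) C(1) _ _ this] g h B C show "g = h" by auto
  qed
  define K where "K = 2/\<delta> + 5"
  have Kpos: "K > 0" unfolding K_def using dpos by (simp add: add_pos_pos)
  show ?thesis
  proof (rule that[OF Kpos], intro conjI)
    fix R :: real assume R: "0 \<le> R"
    define S where "S = {g\<in>\<Gamma>. norm (g 0) \<le> R}"
    define k where "k = \<lceil>(R+1)/\<delta>\<rceil>+1"
    define I where "I = {-k..k}"
    define T where "T = (Pi\<^sub>E UNIV (\<lambda>_::'n. I)) \<times> (Pi\<^sub>E UNIV (\<lambda>_::'n. Pi\<^sub>E UNIV (\<lambda>_::'n. I)))"
    have fT: "finite T" unfolding T_def I_def by (intro finite_cartesian_product finite_PiE) auto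
    have sub: "key ` S \<subseteq> T"
    proof
      fix y assume "y \<in> key ` S"
      then obtain g where g: "g \<in> \<Gamma>" "norm (g 0) \<le> R" and y: "y = key g" unfolding S_def by blast
      obtain B b where B: "orthogonal_matrix B" "g = isom B b" using isomE[OF GE[OF g(1)]] by blast
      have "\<bar>b$i\<bar> \<le> R+1" for i using g(2) B component_le_norm_cart[of b i] by (simp add: isom_0)
      hence 1: "\<lfloor>b$i/\<delta>\<rfloor> \<in> I" for i unfolding I_def k_def using floor_bound[OF dpos] by blast
      have "\<bar>B$i$j\<bar> \<le> R+1" for i j using orth_entry[OF B(1), of i j] R by linarith
      hence 2: "\<lfloor>B$i$j/\<delta>\<rfloor> \<in> I" for i j unfolding I_def k_def using floor_bound[OF dpos] by blast
      show "y \<in> T" unfolding y key_def T_def using 1 2 B by (simp add: mBi isom_0 PiE_UNIV_domain)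
    qed
    show "finite {g\<in>\<Gamma>. norm (g 0) \<le> R}"
      using inj_on_finite[OF inj_on_subset[OF inj] sub fT] unfolding S_def by blast
    have cS: "card S \<le> card T" using card_inj_on_le[OF inj_on_subset[OF inj] sub fT] unfolding S_def by blast
    have cT: "card T = card I ^ (CARD('n) + CARD('n)*CARD('n))"
      unfolding T_def by (simp add: card_cartesian_product card_PiE power_add power_mult)
    have "0 \<le> (R+1)/\<delta>" using R dpos by simp
    hence k0: "0 \<le> k" unfolding k_def by simp
    have cI: "real (card I) = 2*k+1" unfolding I_def using k0 by simp
    have "real_of_int k \<le> (R+1)/\<delta> + 2" unfolding k_def using ceiling_correct[of "(R+1)/\<delta>"] by simp
    hence "real (card I) \<le> 2*((R+1)/\<delta>) + 5" using cI by linarith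
    also have "\<dots> \<le> 2*((R+1)/\<delta>) + 5*(R+1)" using R by simp
    also have "\<dots> = K*(R+1)" unfolding K_def by (simp add: algebra_simps)
    finally have cIK: "real (card I) \<le> K*(R+1)" .
    have "real (card S) \<le> real (card T)" using cS by simp
    also have "\<dots> = real (card I) ^ (CARD('n) + CARD('n)*CARD('n))" using cT by simp
    also have "\<dots> \<le> (K*(R+1)) ^ (CARD('n) + CARD('n)*CARD('n))"
      by (rule power_mono[OF cIK]) simp
    finally show "real (card {g\<in>\<Gamma>. norm (g 0) \<le> R}) \<le> (K*(R+1))^(CARD('n) + CARD('n)*CARD('n))"
      unfolding S_def .
  qed
qed



lemma mv_scale: fixes M :: "real^'n^'n" shows "M *v (k *\<^sub>R v) = k *\<^sub>R (M *v v)"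
  by (simp add: vec_eq_iff matrix_vector_mult_def sum_distrib_left algebra_simps)

lemma A_inv:
  fixes A' :: "real^'n^'n"
  assumes O: "orthogonal_matrix A'" and l: "lam > 0"
  shows "inv_into UNIV (\<lambda>x. lam *\<^sub>R (A' *v x)) = (\<lambda>x. (1/lam) *\<^sub>R (transpose A' *v x))"
proof (rule inv_equality)
  fix x
  show "(1/lam) *\<^sub>R (transpose A' *v (lam *\<^sub>R (A' *v x))) = x"
    using O l by (simp add: mv_scale matrix_vector_mul_assoc orthogonal_matrix_def)
next
  fix y
  show "lam *\<^sub>R (A' *v ((1/lam) *\<^sub>R (transpose A' *v y))) = y"
    using O l by (simp add: mv_scale matrix_vector_mul_assoc orthogonal_matrix_def)
qed

lemma conj_facts:
  fixes A' :: "real^'n^'n"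
  assumes O: "orthogonal_matrix A'" and l: "lam > 0"
    and AA: "A = (\<lambda>x. lam *\<^sub>R (A' *v x))"
  shows "A \<circ> inv_into UNIV A = id" "inv_into UNIV A \<circ> A = id"
    "inv_into UNIV A 0 = 0" "\<And>x. norm (A x) = lam * norm x"
proof -
  have Ai: "inv_into UNIV A = (\<lambda>x. (1/lam) *\<^sub>R (transpose A' *v x))" using A_inv[OF O l] AA by simp
  show "A \<circ> inv_into UNIV A = id" "inv_into UNIV A \<circ> A = id"
    unfolding Ai using O l by (simp_all add: AA add: fun_eq_iff mv_scale matrix_vector_mul_assoc orthogonal_matrix_def)
  show "inv_into UNIV A 0 = 0" unfolding Ai by simp
  show "\<And>x. norm (A x) = lam * norm x" unfolding AA using l orth_norm[OF O] by simp
qed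



theorem mainTheorem13:
  fixes \<Gamma> :: "(real^'n \<Rightarrow> real^'n) set"
    and A' :: "real^'n^'n" and lam :: real and A :: "real^'n \<Rightarrow> real^'n"
  assumes "subgroup \<Gamma> Eucl_group"
    and "discrete_isom_set \<Gamma>"
    and "orthogonal_matrix A'"
    and "lam > 0"
    and "A = (\<lambda>x. lam *\<^sub>R (A' *v x))"
    and "conj_set A \<Gamma> \<subseteq> \<Gamma>"
  shows "subgroup (conj_set A \<Gamma>) (Eucl_group\<lparr>carrier := \<Gamma>\<rparr>)
         \<and> finite (rcosets\<^bsub>Eucl_group\<lparr>carrier := \<Gamma>\<rparr>\<^esub> (conj_set A \<Gamma>))"
proof -
  note sg = assms(1) and disc = assms(2) and l = assms(4)
  let ?G = "Eucl_group\<lparr>carrier := \<Gamma>\<rparr>"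
  define H where "H = conj_set A \<Gamma>"
  define Ai where "Ai = inv_into UNIV A"
  have grp: "group ?G" using group.subgroup_imp_group[OF group_E sg] .
  have Gm [simp]: "mult ?G = (\<lambda>f g. f \<circ> g)" and Go [simp]: "one ?G = id" and Gc [simp]: "carrier ?G = \<Gamma>"
    by simp_all
  have cf: "A \<circ> Ai = id" "Ai \<circ> A = id" "Ai 0 = 0" "\<And>x. norm (A x) = lam * norm x"
    using conj_facts[OF assms(3) l assms(5)] unfolding Ai_def by auto
  have AAi: "A (Ai x) = x" for x using fun_cong[OF cf(1), of x] by simp
  have AiA: "Ai (A x) = x" for x using fun_cong[OF cf(2), of x] by simp
  define cj where "cj \<gamma> = A \<circ> \<gamma> \<circ> Ai" for \<gamma> :: "real^'n \<Rightarrow> real^'n"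
  have Hcj: "H = cj ` \<Gamma>" unfolding H_def conj_set_def cj_def Ai_def by auto
  have HG: "H \<subseteq> \<Gamma>" using assms(6) unfolding H_def .
  have cj_comp: "cj \<gamma> \<circ> cj \<delta> = cj (\<gamma> \<circ> \<delta>)" for \<gamma> \<delta> by (simp add: cj_def fun_eq_iff AiA)
  have cj_id: "cj id = id" by (simp add: cj_def fun_eq_iff AAi)
  have cj_inj: "inj cj"
  proof (rule injI)
    fix \<gamma> \<delta> assume "cj \<gamma> = cj \<delta>"
    hence "Ai (cj \<gamma> (A x)) = Ai (cj \<delta> (A x))" for x by simp
    thus "\<gamma> = \<delta>" by (simp add: cj_def fun_eq_iff AiA)
  qed
  have cj0: "norm (cj \<gamma> 0) = lam * norm (\<gamma> 0)" for \<gamma> by (simp add: cj_def cf)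
  have idG: "id \<in> \<Gamma>" using subgroup.one_closed[OF sg] by simp
  have mG: "f \<in> \<Gamma> \<Longrightarrow> g \<in> \<Gamma> \<Longrightarrow> f \<circ> g \<in> \<Gamma>" for f g using subgroup.m_closed[OF sg] by fastforce
  have subH: "subgroup H ?G"
  proof (rule group.subgroupI[OF grp])
    show "H \<subseteq> carrier ?G" using HG by simp
    show "H \<noteq> {}" using idG Hcj by auto
  next
    fix a assume "a \<in> H"
    then obtain \<gamma> where g: "\<gamma> \<in> \<Gamma>" and a: "a = cj \<gamma>" using Hcj by auto
    have ig: "inv\<^bsub>?G\<^esub> \<gamma> \<in> \<Gamma>" using group.inv_closed[OF grp, of \<gamma>] g by simp
    have li: "inv\<^bsub>?G\<^esub> \<gamma> \<circ> \<gamma> = id" using group.l_inv[OF grp, of \<gamma>] g by simp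
    have "cj (inv\<^bsub>?G\<^esub> \<gamma>) \<in> H" using ig Hcj by auto
    hence c1: "cj (inv\<^bsub>?G\<^esub> \<gamma>) \<in> \<Gamma>" using HG by auto
    have c2: "cj \<gamma> \<in> \<Gamma>" using g Hcj HG by auto
    have "inv\<^bsub>?G\<^esub> (cj \<gamma>) = cj (inv\<^bsub>?G\<^esub> \<gamma>)"
      by (rule group.inv_equality[OF grp]) (use c1 c2 li cj_comp cj_id in auto)
    thus "inv\<^bsub>?G\<^esub> a \<in> H" using a \<open>cj (inv\<^bsub>?G\<^esub> \<gamma>) \<in> H\<close> by simp
  next
    fix a b assume "a \<in> H" "b \<in> H"
    then obtain \<gamma> \<delta> where "\<gamma> \<in> \<Gamma>" "\<delta> \<in> \<Gamma>" "a = cj \<gamma>" "b = cj \<delta>" using Hcj by auto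
    thus "a \<otimes>\<^bsub>?G\<^esub> b \<in> H" using Hcj cj_comp mG by auto
  qed
  have fin: "finite (rcosets\<^bsub>?G\<^esub> H)"
  proof (rule ccontr)
    assume inf: "\<not> finite (rcosets\<^bsub>?G\<^esub> H)"
    obtain K where Kpos: "K > 0" and KB: "\<And>R. 0 \<le> R \<Longrightarrow> finite {g\<in>\<Gamma>. norm (g 0) \<le> R} \<and>
     real (card {g\<in>\<Gamma>. norm (g 0) \<le> R}) \<le> (K*(R+1))^(CARD('n) + CARD('n)*CARD('n))"
      using poly_bound[OF sg disc] by blast
    define d where "d = CARD('n) + CARD('n)*CARD('n)"
    define Nf where "Nf r = card {g\<in>\<Gamma>. norm (g 0) \<le> r}" for r
    define \<mu> where "\<mu> = max 1 lam"
    have mu1: "\<mu> \<ge> 1" unfolding \<mu>_def by simp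
    define Q where "Q = (2*\<mu>)^d"
    have Q1: "Q \<ge> 1" unfolding Q_def using mu1 by (intro one_le_power) simp
    define m where "m = nat \<lceil>2*Q\<rceil>"
    have m2: "real m \<ge> 2*Q" unfolding m_def by (rule real_nat_ceiling_ge)
    obtain Cs where Cs: "finite Cs" "card Cs = m" "Cs \<subseteq> rcosets\<^bsub>?G\<^esub> H"
      using infinite_arbitrarily_large[OF inf] by blast
    define rep where "rep X = (SOME a. a \<in> \<Gamma> \<and> X = H #>\<^bsub>?G\<^esub> a)" for X
    have rep: "rep X \<in> \<Gamma> \<and> X = H #>\<^bsub>?G\<^esub> rep X" if "X \<in> rcosets\<^bsub>?G\<^esub> H" for X
    proof -
      have "\<exists>a. a \<in> \<Gamma> \<and> X = H #>\<^bsub>?G\<^esub> a" using that unfolding RCOSETS_def by auto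
      thus ?thesis unfolding rep_def by (rule someI_ex)
    qed
    define S where "S = rep ` Cs"
    have inj_rep: "inj_on rep Cs"
    proof (rule inj_onI)
      fix X Y assume "X \<in> Cs" "Y \<in> Cs" "rep X = rep Y"
      have "X = H #>\<^bsub>?G\<^esub> rep X" using rep \<open>X \<in> Cs\<close> Cs(3) by blast
      moreover have "Y = H #>\<^bsub>?G\<^esub> rep Y" using rep \<open>Y \<in> Cs\<close> Cs(3) by blast
      ultimately show "X = Y" using \<open>rep X = rep Y\<close> by simp
    qed
    have cardS: "card S = m" unfolding S_def using card_image[OF inj_rep] Cs(2) by simp
    have finS: "finite S" unfolding S_def using Cs(1) by simp
    have SG: "S \<subseteq> \<Gamma>" unfolding S_def using rep Cs(3) by blast
    define c where "c = (\<Sum>s\<in>S. norm (s 0))"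
    have c0: "c \<ge> 0" unfolding c_def by (simp add: sum_nonneg)
    have sc: "s \<in> S \<Longrightarrow> norm (s 0) \<le> c" for s unfolding c_def
      using member_le_sum[of s S "\<lambda>s. norm (s 0)"] finS by simp
    have step: "real m * real (Nf r) \<le> real (Nf (lam*r + c))" if r0: "r \<ge> 0" for r
    proof -
      define R where "R = lam*r + c"
      have R0: "R \<ge> 0" unfolding R_def using r0 l c0 by simp
      define Hs where "Hs = cj ` {\<gamma>\<in>\<Gamma>. norm (\<gamma> 0) \<le> r}"
      have fr: "finite {\<gamma>\<in>\<Gamma>. norm (\<gamma> 0) \<le> r}" using KB[OF r0] by blast
      have cardHs: "card Hs = Nf r" unfolding Hs_def Nf_def
        using card_image[OF inj_on_subset[OF cj_inj]] by blast
      have finHs: "finite Hs" unfolding Hs_def using fr by simp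
      have HsH: "Hs \<subseteq> H" unfolding Hs_def Hcj by auto
      have Hs0: "h \<in> Hs \<Longrightarrow> norm (h 0) \<le> lam * r" for h
        unfolding Hs_def using cj0 l by (auto intro: mult_left_mono)
      define F where "F = (\<lambda>(h::real^'n \<Rightarrow> real^'n, s::real^'n \<Rightarrow> real^'n). h \<circ> s)"
      have Fsub: "F ` (Hs \<times> S) \<subseteq> {g\<in>\<Gamma>. norm (g 0) \<le> R}"
      proof
        fix y assume "y \<in> F ` (Hs \<times> S)"
        then obtain h s where hs: "h \<in> Hs" "s \<in> S" and y: "y = h \<circ> s" unfolding F_def by auto
        have hG: "h \<in> \<Gamma>" using hs HsH HG by auto
        have sG: "s \<in> \<Gamma>" using hs SG by auto
        obtain B b where B: "orthogonal_matrix B" "h = isom B b"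
          using isomE[of h] hG subgroup.subset[OF sg] by blast
        have "norm (y 0) = norm (B *v s 0 + b)" using y B by (simp add: isom_def)
        also have "\<dots> \<le> norm (s 0) + norm b" using norm_triangle_ineq[of "B *v s 0" b] orth_norm[OF B(1)] by simp
        also have "\<dots> \<le> c + lam * r" using sc[OF hs(2)] Hs0[OF hs(1)] B by (simp add: isom_0)
        finally show "y \<in> {g\<in>\<Gamma>. norm (g 0) \<le> R}" using y mG[OF hG sG] unfolding R_def by simp
      qed
      have Finj: "inj_on F (Hs \<times> S)"
      proof (rule inj_onI)
        fix p q assume p: "p \<in> Hs \<times> S" and q: "q \<in> Hs \<times> S" and Fe: "F p = F q"
        obtain h s where hs: "p = (h, s)" "h \<in> Hs" "s \<in> S" using p by auto
        obtain h' s' where hs': "q = (h', s')" "h' \<in> Hs" "s' \<in> S" using q by auto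
        have e: "h \<circ> s = h' \<circ> s'" using Fe hs hs' unfolding F_def by simp
        obtain X where X: "X \<in> Cs" "s = rep X" using hs(3) unfolding S_def by auto
        obtain X' where X': "X' \<in> Cs" "s' = rep X'" using hs'(3) unfolding S_def by auto
        have XX: "X = H #>\<^bsub>?G\<^esub> s" "X' = H #>\<^bsub>?G\<^esub> s'" using rep X X' Cs(3) by auto
        have "h \<circ> s \<in> X" unfolding XX r_coset_def using hs(2) HsH by auto
        moreover have "h' \<circ> s' \<in> X'" unfolding XX r_coset_def using hs'(2) HsH by auto
        ultimately have "\<not> disjnt X X'" using e by (auto simp: disjnt_def)
        hence "X = X'" using pairwiseD[OF group.rcos_disjoint[OF grp subH]] X(1) X'(1) Cs(3) by blast
        hence ss: "s = s'" using X X' by simp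
        have "h \<otimes>\<^bsub>?G\<^esub> s = h' \<otimes>\<^bsub>?G\<^esub> s" using e ss by simp
        hence "h = h'" using group.right_cancel[OF grp, of s h h'] hs hs' HsH HG SG by auto
        thus "p = q" using hs hs' ss by simp
      qed
      have "card (F ` (Hs \<times> S)) \<le> card {g\<in>\<Gamma>. norm (g 0) \<le> R}"
        by (rule card_mono) (use KB[OF R0] Fsub in auto)
      moreover have "card (F ` (Hs \<times> S)) = Nf r * m"
        using card_image[OF Finj] cardHs cardS by (simp add: card_cartesian_product)
      ultimately have "Nf r * m \<le> Nf R" unfolding Nf_def by simp
      hence "real (Nf r * m) \<le> real (Nf R)" by linarith
      thus ?thesis unfolding R_def by (simp add: mult.commute)
    qed
    define rr where "rr j = c * (\<Sum>i<j. lam^i)" for j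
    have rr0: "rr j \<ge> 0" for j unfolding rr_def using c0 l by (simp add: sum_nonneg)
    have rrS: "rr (Suc j) = lam * rr j + c" for j
    proof -
      have "(\<Sum>i<Suc j. lam^i) = 1 + (\<Sum>i<j. lam^Suc i)" using sum.lessThan_Suc_shift[of "\<lambda>i. lam^i" j] by simp
      also have "(\<Sum>i<j. lam^Suc i) = lam * (\<Sum>i<j. lam^i)" by (simp add: sum_distrib_left)
      finally show ?thesis unfolding rr_def by (simp add: distrib_left)
    qed
    have low: "real m ^ j \<le> real (Nf (rr j))" for j
    proof (induction j)
      case 0
      have "finite {g\<in>\<Gamma>. norm (g 0) \<le> 0}" using KB[of 0] by simp
      moreover have "id \<in> {g\<in>\<Gamma>. norm (g 0) \<le> 0}" using idG by simp
      ultimately have "card {g\<in>\<Gamma>. norm (g 0) \<le> 0} \<noteq> 0" by (auto simp: card_eq_0_iff)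
      hence "Nf 0 \<ge> 1" unfolding Nf_def by simp
      thus ?case by (simp add: rr_def)
    next
      case (Suc j)
      have "real m ^ Suc j = real m * real m ^ j" by simp
      also have "\<dots> \<le> real m * real (Nf (rr j))" using Suc by (simp add: mult_left_mono)
      also have "\<dots> \<le> real (Nf (rr (Suc j)))" using step[OF rr0[of j]] rrS by simp
      finally show ?case .
    qed
    have rrb: "rr j + 1 \<le> (c+1) * (2*\<mu>)^j" for j
    proof -
      have "(\<Sum>i<j. lam^i) \<le> (\<Sum>i<j. \<mu>^j)"
      proof (rule sum_mono)
        fix i assume "i \<in> {..<j}"
        have "lam^i \<le> \<mu>^i" using l by (intro power_mono) (auto simp: \<mu>_def)
        also have "\<dots> \<le> \<mu>^j" using mu1 \<open>i \<in> {..<j}\<close> by (intro power_increasing) auto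
        finally show "lam^i \<le> \<mu>^j" .
      qed
      also have "\<dots> = real j * \<mu>^j" by simp
      also have "\<dots> \<le> 2^j * \<mu>^j"
      proof -
        have "real j \<le> real (2^j)" using less_exp[of j] by (simp only: of_nat_le_iff less_imp_le)
        hence "real j \<le> 2^j" by simp
        thus ?thesis using mu1 by (intro mult_right_mono) auto
      qed
      finally have a: "(\<Sum>i<j. lam^i) \<le> (2*\<mu>)^j" by (simp add: power_mult_distrib)
      have b: "1 \<le> (2*\<mu>)^j" using mu1 by (intro one_le_power) simp
      have "rr j \<le> c * (2*\<mu>)^j" unfolding rr_def using a c0 by (simp add: mult_left_mono)
      thus ?thesis using b by (simp add: algebra_simps)
    qed
    define D where "D = (K*(c+1))^d"
    have up: "real (Nf (rr j)) \<le> D * Q^j" for j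
    proof -
      have "real (Nf (rr j)) \<le> (K*(rr j+1))^d" using KB[OF rr0[of j]] unfolding Nf_def d_def by blast
      also have "\<dots> \<le> (K*((c+1) * (2*\<mu>)^j))^d"
        using rrb[of j] Kpos rr0[of j] by (intro power_mono mult_left_mono) auto
      also have "\<dots> = D * Q^j" unfolding D_def Q_def
        by (simp add: power_mult_distrib mult.assoc power_mult[symmetric] mult.commute)
      finally show ?thesis .
    qed
    have key: "2^j \<le> D" for j
    proof -
      have "(2*Q)^j \<le> real m ^ j" using m2 Q1 by (intro power_mono) auto
      also have "\<dots> \<le> D * Q^j" using low[of j] up[of j] by linarith
      finally have "2^j * Q^j \<le> D * Q^j" by (simp add: power_mult_distrib)
      moreover have "Q^j > 0" using Q1 by simp
      ultimately show ?thesis by simp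
    qed
    define j where "j = nat \<lceil>D\<rceil>"
    have "D \<le> real j" unfolding j_def by (rule real_nat_ceiling_ge)
    also have "real j < real (2^j)" using less_exp[of j] by (simp only: of_nat_less_iff)
    also have "real (2^j) = (2::real)^j" by simp
    finally show False using key[of j] by simp
  qed
  show ?thesis using subH fin unfolding H_def by simp
qed


end
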